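(* In every run of the algorithm described in the context, no correct process blocks forever in the initial wait statement "wait until $b=(w\_sync_i[j]+1)\bmod 2$" of the handler for a received message $\textsc{write}(b,v)$.
   Context: Model. There are $n$ asynchronous processes $p_1,\dots,p_n$, of which up to $t<n/2$ may crash; a process runs its algorithm correctly until it crashes, and a process that never crashes is correct. Each ordered pair of processes is linked by a reliable (no loss, corruption, duplication or creation; every message sent to a correct process is eventually received), asynchronous, not necessarily FIFO channel. $p_w$ is the single writer, invoking writes sequentially; $v_0$ is the initial value. Messages: $\textsc{write}(b,v)$ with $b\in\{0,1\}$, which stands for the two types $\textsc{write0}(v)$ and $\textsc{write1}(v)$; $\textsc{read}()$; $\textsc{proceed}()$. Variables of $p_i$. These are: $history_i$ with $history_i[0]=v_0$; $w\_sync_i[1..n]$, initially all $0$; $r\_sync_i[1..n]$, initially all $0$. $\mathsf{write}(v)$ by $p_w$: $wsn\gets w\_sync_w[w]+1$; $w\_sync_w[w]\gets wsn$; $history_w[wsn]\gets v$. Send $\textsc{write}(wsn\bmod 2,v)$ to each $p_j$ with $w\_sync_w[j]=wsn-1$. Wait until at least $n-t$ indices $j$ have $w\_sync_w[j]=wsn$. Return. $\mathsf{read}()$ by $p_i$: $r\_sync_i[i]\gets r\_sync_i[i]+1$ and call the new value $rsn$. Send $\textsc{read}()$ to all $p_j$ with $j\ne i$. Wait until at least $n-t$ indices $j$ have $r\_sync_i[j]=rsn$. Let $sn\gets w\_sync_i[i]$. Wait until at least $n-t$ indices $j$ have $w\_sync_i[j]\ge sn$. Return $history_i[sn]$. On receipt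 of $\textsc{write}(b,v)$ from $p_j$ at $p_i$: Wait until $b=(w\_sync_i[j]+1)\bmod 2$. Let $wsn\gets w\_sync_i[j]+1$. If $wsn=w\_sync_i[i]+1$, then set $w\_sync_i[i]\gets wsn$ and $history_i[wsn]\gets v$, and send $\textsc{write}(wsn\bmod 2,v)$ to each $p_\ell$ with $w\_sync_i[\ell]=wsn-1$. Else, if $wsn<w\_sync_i[i]$, send $\textsc{write}((wsn+1)\bmod 2,history_i[wsn+1])$ to $p_j$. Finally set $w\_sync_i[j]\gets wsn$. On receipt of $\textsc{read}()$ from $p_j$ at $p_i$: Let $sn\gets w\_sync_i[i]$; wait until $w\_sync_i[j]\ge sn$; send $\textsc{proceed}()$ to $p_j$. On receipt of $\textsc{proceed}()$ from $p_j$ at $p_i$: $r\_sync_i[j]\gets r\_sync_i[j]+1$. Message handlers run concurrently; a waiting handler does not block the reception of other messages. *)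

theory Defs
  imports Main
begin

text \<open>Processes are identified by 1..n; the writer is p_w.  Messages and handler
instances carry unique identifiers so that individual messages / handler
executions can be tracked.\<close>

datatype 'v msg = WRITE nat 'v | READ | PROCEED

text \<open>Handler instances that are waiting: HW j b v is the handler for a received
WRITE(b,v) from p_j, waiting on its initial wait; HR j sn is the handler for a
received READ from p_j that recorded sn = w_sync_i[i] at reception.\<close>
datatype 'v hnd = HW nat nat 'v | HR nat nat

datatype opst = OIdle | Writing nat | RdWait1 nat | RdWait2 nat

record 'v lst =
  hist  :: "nat \<Rightarrow> 'v"
  wsync :: "nat \<Rightarrow> nat"
  rsync :: "nat \<Rightarrow> nat"
  ost   :: opst
  pend  :: "(nat \<times> 'v hnd) set"

text \<open>Messages in transit: (id, sender, destination, message).\<close>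
record 'v conf =
  loc     :: "nat \<Rightarrow> 'v lst"
  net     :: "(nat \<times> nat \<times> nat \<times> 'v msg) set"
  crashed :: "nat set"
  cnt     :: nat

datatype 'v act =
    InvWrite 'v | RetWrite | InvRead nat | PassRead nat | RetRead nat
  | Deliver nat | RunH nat nat | Crash nat | Skip

definition upd :: "nat \<Rightarrow> 'v lst \<Rightarrow> 'v conf \<Rightarrow> 'v conf" where
  "upd i s c = c\<lparr>loc := (loc c)(i := s)\<rparr>"

definition send :: "nat \<Rightarrow> nat \<Rightarrow> nat set \<Rightarrow> 'v msg \<Rightarrow> 'v conf \<Rightarrow> 'v conf" where
  "send n i S m c = c\<lparr>net := net c \<union> {(cnt c + l, i, l, m) | l. l \<in> S},
                      cnt := cnt c + n + 1\<rparr>"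

text \<open>Body of the WRITE handler at p_i, executed once its initial wait is passed
(the handler instance (h,hd) has already been removed from the pending set in c).\<close>
definition runW :: "nat \<Rightarrow> nat \<Rightarrow> nat \<Rightarrow> 'v \<Rightarrow> 'v conf \<Rightarrow> 'v conf" where
  "runW n i j v c =
     (let s = loc c i; wsn = wsync s j + 1;
          c1 = (if wsn = wsync s i + 1 then
                  (let s1 = s\<lparr>wsync := (wsync s)(i := wsn), hist := (hist s)(wsn := v)\<rparr>
                   in send n i {l \<in> {1..n}. wsync s1 l = wsn - 1} (WRITE (wsn mod 2) v) (upd i s1 c))
                else if wsn < wsync s i then
                  send n i {j} (WRITE ((wsn + 1) mod 2) (hist s (wsn + 1))) c
                else c);
          s2 = loc c1 i
      in upd i (s2\<lparr>wsync := (wsync s2)(j := wsn)\<rparr>) c1)"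

definition recv :: "nat \<Rightarrow> nat \<Rightarrow> nat \<Rightarrow> 'v msg \<Rightarrow> 'v conf \<Rightarrow> 'v conf" where
  "recv mid src dst m c =
     (let s = loc c dst in
      case m of
        WRITE b v \<Rightarrow> upd dst (s\<lparr>pend := insert (mid, HW src b v) (pend s)\<rparr>) c
      | READ \<Rightarrow> upd dst (s\<lparr>pend := insert (mid, HR src (wsync s dst)) (pend s)\<rparr>) c
      | PROCEED \<Rightarrow> upd dst (s\<lparr>rsync := (rsync s)(src := rsync s src + 1)\<rparr>) c)"

text \<open>One atomic step of the system (n processes, at most t crashes, writer w).\<close>
definition step :: "nat \<Rightarrow> nat \<Rightarrow> nat \<Rightarrow> 'v conf \<Rightarrow> 'v act \<Rightarrow> 'v conf \<Rightarrow> bool" where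
  "step n t w c a c' =
    (case a of
      InvWrite v \<Rightarrow> w \<notin> crashed c \<and> ost (loc c w) = OIdle \<and>
         (let s = loc c w; wsn = wsync s w + 1;
              s' = s\<lparr>wsync := (wsync s)(w := wsn), hist := (hist s)(wsn := v), ost := Writing wsn\<rparr>
          in c' = send n w {j \<in> {1..n}. wsync s' j = wsn - 1} (WRITE (wsn mod 2) v) (upd w s' c))
    | RetWrite \<Rightarrow> w \<notin> crashed c \<and>
         (\<exists>wsn. ost (loc c w) = Writing wsn \<and>
                card {j \<in> {1..n}. wsync (loc c w) j = wsn} \<ge> n - t \<and>
                c' = upd w ((loc c w)\<lparr>ost := OIdle\<rparr>) c)
    | InvRead i \<Rightarrow> i \<in> {1..n} \<and> i \<notin> crashed c \<and> ost (loc c i) = OIdle \<and>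
         (let s = loc c i; rsn = rsync s i + 1;
              s' = s\<lparr>rsync := (rsync s)(i := rsn), ost := RdWait1 rsn\<rparr>
          in c' = send n i {j \<in> {1..n}. j \<noteq> i} READ (upd i s' c))
    | PassRead i \<Rightarrow> i \<in> {1..n} \<and> i \<notin> crashed c \<and>
         (\<exists>rsn. ost (loc c i) = RdWait1 rsn \<and>
                card {j \<in> {1..n}. rsync (loc c i) j = rsn} \<ge> n - t \<and>
                c' = upd i ((loc c i)\<lparr>ost := RdWait2 (wsync (loc c i) i)\<rparr>) c)
    | RetRead i \<Rightarrow> i \<in> {1..n} \<and> i \<notin> crashed c \<and>
         (\<exists>sn. ost (loc c i) = RdWait2 sn \<and>
                card {j \<in> {1..n}. wsync (loc c i) j \<ge> sn} \<ge> n - t \<and>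
                c' = upd i ((loc c i)\<lparr>ost := OIdle\<rparr>) c)
    | Deliver mid \<Rightarrow> (\<exists>src dst m. (mid, src, dst, m) \<in> net c \<and> dst \<notin> crashed c \<and>
                 c' = recv mid src dst m (c\<lparr>net := net c - {(mid, src, dst, m)}\<rparr>))
    | RunH i h \<Rightarrow> i \<in> {1..n} \<and> i \<notin> crashed c \<and>
         (\<exists>hd. (h, hd) \<in> pend (loc c i) \<and>
            (let s = loc c i; c0 = upd i (s\<lparr>pend := pend s - {(h, hd)}\<rparr>) c in
             case hd of
               HW j b v \<Rightarrow> b = (wsync s j + 1) mod 2 \<and> c' = runW n i j v c0
             | HR j sn \<Rightarrow> wsync s j \<ge> sn \<and> c' = send n i {j} PROCEED c0))
    | Crash i \<Rightarrow> i \<in> {1..n} \<and> i \<notin> crashed c \<and> card (insert i (crashed c)) \<le> t \<and>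
         c' = c\<lparr>crashed := insert i (crashed c)\<rparr>
    | Skip \<Rightarrow> c' = c)"

definition init_conf :: "'v \<Rightarrow> 'v conf \<Rightarrow> bool" where
  "init_conf v0 c \<longleftrightarrow> net c = {} \<and> crashed c = {} \<and> cnt c = 0 \<and>
     (\<forall>i. hist (loc c i) 0 = v0 \<and> wsync (loc c i) = (\<lambda>_. 0) \<and> rsync (loc c i) = (\<lambda>_. 0)
          \<and> ost (loc c i) = OIdle \<and> pend (loc c i) = {})"

definition enabled :: "nat \<Rightarrow> nat \<Rightarrow> nat \<Rightarrow> 'v conf \<Rightarrow> 'v act \<Rightarrow> bool" where
  "enabled n t w c a \<longleftrightarrow> (\<exists>c'. step n t w c a c')"

definition correct :: "nat \<Rightarrow> (nat \<Rightarrow> 'v conf) \<Rightarrow> nat \<Rightarrow> bool" where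
  "correct n \<rho> i \<longleftrightarrow> i \<in> {1..n} \<and> (\<forall>k. i \<notin> crashed (\<rho> k))"

text \<open>Local (non-invocation) actions of process p_i, subject to weak fairness.\<close>
definition local_act :: "nat \<Rightarrow> nat \<Rightarrow> 'v act \<Rightarrow> bool" where
  "local_act w i a \<longleftrightarrow> a = PassRead i \<or> a = RetRead i \<or> (\<exists>h. a = RunH i h) \<or> (i = w \<and> a = RetWrite)"

definition run :: "nat \<Rightarrow> nat \<Rightarrow> nat \<Rightarrow> 'v \<Rightarrow> (nat \<Rightarrow> 'v conf) \<Rightarrow> (nat \<Rightarrow> 'v act) \<Rightarrow> bool" where
  "run n t w v0 \<rho> \<sigma> \<longleftrightarrow>
     init_conf v0 (\<rho> 0) \<and>
     (\<forall>k. step n t w (\<rho> k) (\<sigma> k) (\<rho> (Suc k))) \<and>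
     \<comment> \<open>reliable channels: every message to a correct process is eventually received\<close>
     (\<forall>k mid src dst m. (mid, src, dst, m) \<in> net (\<rho> k) \<and> correct n \<rho> dst \<longrightarrow>
          (\<exists>k' \<ge> k. \<sigma> k' = Deliver mid)) \<and>
     \<comment> \<open>weak fairness: a correct process eventually takes a continuously enabled local step\<close>
     (\<forall>i a k0. correct n \<rho> i \<and> local_act w i a \<and> (\<forall>k \<ge> k0. enabled n t w (\<rho> k) a) \<longrightarrow>
          (\<exists>k \<ge> k0. \<sigma> k = a))"

end

theory Submission imports Defs begin

lemma upd_simps[simp]: "loc (upd i s c) = (loc c)(i := s)" "net (upd i s c) = net c"
  "cnt (upd i s c) = cnt c" "crashed (upd i s c) = crashed c"
  by (simp_all add: upd_def)

lemma send_simps[simp]: "loc (send n p S m c) = loc c"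
  "net (send n p S m c) = net c \<union> {(cnt c + l, p, l, m) | l. l \<in> S}"
  "cnt (send n p S m c) = cnt c + n + 1" "crashed (send n p S m c) = crashed c"
  by (simp_all add: send_def)

definition isW :: "'v conf \<Rightarrow> nat \<Rightarrow> nat \<Rightarrow> nat \<Rightarrow> nat \<Rightarrow> bool" where
  "isW c j i m b \<longleftrightarrow> (\<exists>v. (m, j, i, WRITE b v) \<in> net c) \<or> (\<exists>v. (m, HW j b v) \<in> pend (loc c i))"

definition OW :: "'v conf \<Rightarrow> nat \<Rightarrow> nat \<Rightarrow> nat set" where
  "OW c j i = {m. \<exists>b. isW c j i m b}"

definition idinv :: "nat \<Rightarrow> 'v conf \<Rightarrow> bool" where
  "idinv n c \<longleftrightarrow>
    (\<forall>m x x'. (m,x) \<in> net c \<longrightarrow> (m,x') \<in> net c \<longrightarrow> x = x') \<and>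
    (\<forall>m x. (m,x) \<in> net c \<longrightarrow> m < cnt c) \<and>
    (\<forall>p m h. (m,h) \<in> pend (loc c p) \<longrightarrow> m < cnt c \<and> (\<forall>x. (m,x) \<notin> net c)) \<and>
    (\<forall>p m h h'. (m,h) \<in> pend (loc c p) \<longrightarrow> (m,h') \<in> pend (loc c p) \<longrightarrow> h = h') \<and>
    (\<forall>m s d x. (m,s,d,x) \<in> net c \<longrightarrow> s \<in> {1..n} \<and> d \<in> {1..n} \<and> (\<forall>b v. x = WRITE b v \<longrightarrow> s \<noteq> d)) \<and>
    (\<forall>p m j b v. (m, HW j b v) \<in> pend (loc c p) \<longrightarrow> j \<in> {1..n} \<and> j \<noteq> p) \<and>
    (\<forall>p m j sn. (m, HR j sn) \<in> pend (loc c p) \<longrightarrow> j \<in> {1..n})"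

abbreviation V :: "'v conf \<Rightarrow> nat \<Rightarrow> nat \<Rightarrow> nat" where
  "V c p q \<equiv> wsync (loc c p) q"

definition pairok :: "'v conf \<Rightarrow> nat \<Rightarrow> nat \<Rightarrow> bool" where
  "pairok c j i \<longleftrightarrow>
      card (OW c j i) + V c i j = min (V c j j) (V c j i + 1) \<and>
      (\<forall>m b. isW c j i m b \<longrightarrow> b = (V c i j + 1) mod 2 \<or>
                 (b = (V c i j + 2) mod 2 \<and> card (OW c j i) = 2)) \<and>
      (\<forall>m m' b. isW c j i m b \<longrightarrow> isW c j i m' b \<longrightarrow> m = m')"

definition cinv :: "nat \<Rightarrow> 'v conf \<Rightarrow> bool" where
  "cinv n c \<longleftrightarrow>
    (\<forall>p q. p \<in> {1..n} \<longrightarrow> q \<in> {1..n} \<longrightarrow> V c p q \<le> V c p p) \<and>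
    (\<forall>i j. i \<in> {1..n} \<longrightarrow> j \<in> {1..n} \<longrightarrow> j \<noteq> i \<longrightarrow> pairok c j i)"

lemma OW_finite: "idinv n c \<Longrightarrow> finite (OW c j i)"
  proof (rule finite_subset[of _ "{..<cnt c}"])
  assume I: "idinv n c"
  show "OW c j i \<subseteq> {..<cnt c}"
  proof
    fix m assume "m \<in> OW c j i"
    then obtain b v where "(m, j, i, WRITE b v) \<in> net c \<or> (m, HW j b v) \<in> pend (loc c i)"
      unfolding OW_def isW_def by blast
    then show "m \<in> {..<cnt c}" using I unfolding idinv_def by (metis lessThan_iff)
  qed
qed simp

lemma isW_send: "isW (send n p S m c) j i x b \<longleftrightarrow>
   isW c j i x b \<or> (j = p \<and> i \<in> S \<and> x = cnt c + i \<and> (\<exists>v. m = WRITE b v))"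
  unfolding isW_def by auto

lemma idinvD:
  assumes "idinv n c"
  shows "(m,x) \<in> net c \<Longrightarrow> (m,x') \<in> net c \<Longrightarrow> x = x'"
   and "(m,x) \<in> net c \<Longrightarrow> m < cnt c"
   and "(m,h) \<in> pend (loc c p) \<Longrightarrow> m < cnt c"
   and "(m,h) \<in> pend (loc c p) \<Longrightarrow> (m,x) \<notin> net c"
   and "(m,h) \<in> pend (loc c p) \<Longrightarrow> (m,h') \<in> pend (loc c p) \<Longrightarrow> h = h'"
   and "(m,s,d,y) \<in> net c \<Longrightarrow> s \<in> {1..n}"
   and "(m,s,d,y) \<in> net c \<Longrightarrow> d \<in> {1..n}"
   and "(m,s,d,WRITE b v) \<in> net c \<Longrightarrow> s \<noteq> d"
   and "(m, HW j b v) \<in> pend (loc c p) \<Longrightarrow> j \<in> {1..n}"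
   and "(m, HW j b v) \<in> pend (loc c p) \<Longrightarrow> j \<noteq> p"
   and "(m, HR j sn) \<in> pend (loc c p) \<Longrightarrow> j \<in> {1..n}"
proof -
  note A = assms[unfolded idinv_def]
  note a1 = conjunct1[OF A]
  note a2 = conjunct1[OF conjunct2[OF A]]
  note a3 = conjunct1[OF conjunct2[OF conjunct2[OF A]]]
  note a4 = conjunct1[OF conjunct2[OF conjunct2[OF conjunct2[OF A]]]]
  note a5 = conjunct1[OF conjunct2[OF conjunct2[OF conjunct2[OF conjunct2[OF A]]]]]
  note a6 = conjunct1[OF conjunct2[OF conjunct2[OF conjunct2[OF conjunct2[OF conjunct2[OF A]]]]]]
  note a7 = conjunct2[OF conjunct2[OF conjunct2[OF conjunct2[OF conjunct2[OF conjunct2[OF A]]]]]]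
  show "(m,x) \<in> net c \<Longrightarrow> (m,x') \<in> net c \<Longrightarrow> x = x'" using a1 by blast
  show "(m,x) \<in> net c \<Longrightarrow> m < cnt c" using a2 by blast
  show "(m,h) \<in> pend (loc c p) \<Longrightarrow> m < cnt c" using a3 by blast
  show "(m,h) \<in> pend (loc c p) \<Longrightarrow> (m,x) \<notin> net c" using a3 by blast
  show "(m,h) \<in> pend (loc c p) \<Longrightarrow> (m,h') \<in> pend (loc c p) \<Longrightarrow> h = h'" using a4 by blast
  show "(m,s,d,y) \<in> net c \<Longrightarrow> s \<in> {1..n}" using a5 by blast
  show "(m,s,d,y) \<in> net c \<Longrightarrow> d \<in> {1..n}" using a5 by blast
  show "(m,s,d,WRITE b v) \<in> net c \<Longrightarrow> s \<noteq> d" using a5 by blast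
  show "(m, HW j b v) \<in> pend (loc c p) \<Longrightarrow> j \<in> {1..n}" using a6 by blast
  show "(m, HW j b v) \<in> pend (loc c p) \<Longrightarrow> j \<noteq> p" using a6 by blast
  show "(m, HR j sn) \<in> pend (loc c p) \<Longrightarrow> j \<in> {1..n}" using a7 by blast
qed

lemma idinvI:
  assumes "\<And>m x x'. (m,x) \<in> net c \<Longrightarrow> (m,x') \<in> net c \<Longrightarrow> x = x'"
   and "\<And>m x. (m,x) \<in> net c \<Longrightarrow> m < cnt c"
   and "\<And>m h p. (m,h) \<in> pend (loc c p) \<Longrightarrow> m < cnt c"
   and "\<And>m h p x. (m,h) \<in> pend (loc c p) \<Longrightarrow> (m,x) \<notin> net c"
   and "\<And>m h h' p. (m,h) \<in> pend (loc c p) \<Longrightarrow> (m,h') \<in> pend (loc c p) \<Longrightarrow> h = h'"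
   and "\<And>m s d y. (m,s,d,y) \<in> net c \<Longrightarrow> s \<in> {1..n} \<and> d \<in> {1..n}"
   and "\<And>m s d b v. (m,s,d,WRITE b v) \<in> net c \<Longrightarrow> s \<noteq> d"
   and "\<And>m j b v p. (m, HW j b v) \<in> pend (loc c p) \<Longrightarrow> j \<in> {1..n} \<and> j \<noteq> p"
   and "\<And>m j sn p. (m, HR j sn) \<in> pend (loc c p) \<Longrightarrow> j \<in> {1..n}"
  shows "idinv n c"
  unfolding idinv_def
  apply (intro conjI allI impI)
  subgoal using assms(1) by blast
  subgoal using assms(2) by blast
  subgoal using assms(3) by blast
  subgoal using assms(4) by blast
  subgoal using assms(5) by blast
  subgoal using assms(6) by blast
  subgoal using assms(6) by blast
  subgoal using assms(7) by blast
  subgoal using assms(8) by blast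
  subgoal using assms(8) by blast
  subgoal using assms(9) by blast
  done

lemma net_send_cases:
  assumes "(mm, x) \<in> net (send n p S m c)"
  obtains "(mm, x) \<in> net c" | l where "l \<in> S" "mm = cnt c + l" "x = (p, l, m)"
  using assms by auto

lemma idinv_send:
  assumes I: "idinv n c" and p: "p \<in> {1..n}" and S: "S \<subseteq> {1..n}"
    and nw: "\<And>b v. m = WRITE b v \<Longrightarrow> p \<notin> S"
  shows "idinv n (send n p S m c)"
proof (rule idinvI, goal_cases)
  case (1 mm x x')
  show ?case
  proof (rule net_send_cases[OF 1(1)]; rule net_send_cases[OF 1(2)])
    assume "(mm, x) \<in> net c" "(mm, x') \<in> net c" then show ?thesis using idinvD(1)[OF I] by blast
  next
    fix l assume "(mm, x) \<in> net c" "mm = cnt c + l"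
    then show ?thesis using idinvD(2)[OF I, of mm x] by simp
  next
    fix l assume "(mm, x') \<in> net c" "mm = cnt c + l"
    then show ?thesis using idinvD(2)[OF I, of mm x'] by simp
  next
    fix l l' assume "mm = cnt c + l" "x = (p, l, m)" "mm = cnt c + l'" "x' = (p, l', m)"
    then show ?thesis by simp
  qed
next
  case (2 mm x)
  show ?case
  proof (rule net_send_cases[OF 2])
    assume "(mm, x) \<in> net c" then show ?thesis using idinvD(2)[OF I, of mm x] by simp
  next
    fix l assume "l \<in> S" "mm = cnt c + l"
    moreover have "l \<le> n" using S \<open>l \<in> S\<close> by auto
    ultimately show ?thesis by simp
  qed
next
  case (3 mm h q)
  then have "mm < cnt c" using idinvD(3)[OF I] by simp
  then show ?case by simp
next
  case (4 mm h q x)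
  then have a: "mm < cnt c" "(mm,x) \<notin> net c" using idinvD(3,4)[OF I] by simp_all
  show ?case
  proof
    assume "(mm, x) \<in> net (send n p S m c)"
    then show False by (rule net_send_cases) (use a in simp_all)
  qed
next
  case (5 mm h h' q)
  then show ?case using idinvD(5)[OF I] by simp
next
  case (6 mm s d y)
  show ?case by (rule net_send_cases[OF 6]) (use idinvD(6,7)[OF I] p S in auto)
next
  case (7 mm s d b v)
  show ?case by (rule net_send_cases[OF 7]) (use idinvD(8)[OF I] nw in auto)
next
  case (8 mm j b v q)
  then show ?case using idinvD(9,10)[OF I] by auto
next
  case (9 mm j sn q)
  then show ?case using idinvD(11)[OF I] by auto
qed

lemma idinv_upd:
  assumes I: "idinv n c" and P: "pend s \<subseteq> pend (loc c p)"
  shows "idinv n (upd p s c)"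
proof -
  have sub: "\<And>q. pend (((loc c)(p := s)) q) \<subseteq> pend (loc c q)" using P by auto
  show ?thesis
  proof (rule idinvI, goal_cases)
    case 1 then show ?case using idinvD(1)[OF I] by simp
  next case 2 then show ?case using idinvD(2)[OF I] by simp
  next case 3 then show ?case using idinvD(3)[OF I] sub by (simp, blast)
  next case 4 then show ?case using idinvD(4)[OF I] sub by (simp, blast)
  next case 5 then show ?case using idinvD(5)[OF I] sub by (simp, blast)
  next case 6 then show ?case using idinvD(6,7)[OF I] by simp
  next case 7 then show ?case using idinvD(8)[OF I] by simp
  next case (8 m j b v q) then show ?case using idinvD(9,10)[OF I] sub[of q] by (simp, blast)
  next case (9 m j sn q) then show ?case using idinvD(11)[OF I] sub[of q] by (simp, blast)
  qed
qed

lemma upd_send_comm: "upd i s (send n p S m c) = send n p S m (upd i s c)"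
  by (simp add: upd_def send_def)

lemma runW_A:
  assumes ji: "j \<noteq> i" and y: "wsync (loc c i) j = wsync (loc c i) i"
  shows "runW n i j v c =
       send n i {l \<in> {1..n}. l \<noteq> i \<and> wsync (loc c i) l = wsync (loc c i) i} (WRITE ((wsync (loc c i) i + 1) mod 2) v)
         (upd i ((loc c i)\<lparr>hist := (hist (loc c i))(wsync (loc c i) i + 1 := v),
                  wsync := (wsync (loc c i))(i := wsync (loc c i) i + 1, j := wsync (loc c i) i + 1)\<rparr>) c)"
proof -
  have set_eq: "{l \<in> {1..n}. ((wsync (loc c i))(i := wsync (loc c i) i + 1)) l = wsync (loc c i) i + 1 - 1}
       = {l \<in> {1..n}. l \<noteq> i \<and> wsync (loc c i) l = wsync (loc c i) i}" by auto
  show ?thesis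
    unfolding runW_def Let_def using ji y set_eq
    by (simp add: upd_def send_def)
qed

lemma runW_B:
  assumes ji: "j \<noteq> i" and y: "wsync (loc c i) j + 1 < wsync (loc c i) i"
  shows "runW n i j v c =
       send n i {j} (WRITE ((wsync (loc c i) j + 2) mod 2) (hist (loc c i) (wsync (loc c i) j + 2)))
         (upd i ((loc c i)\<lparr>wsync := (wsync (loc c i))(j := wsync (loc c i) j + 1)\<rparr>) c)"
  unfolding runW_def Let_def using ji y
  by (simp add: upd_def send_def)

lemma runW_C:
  assumes ji: "j \<noteq> i" and y1: "wsync (loc c i) j \<noteq> wsync (loc c i) i"
    and y: "\<not> wsync (loc c i) j + 1 < wsync (loc c i) i"
  shows "runW n i j v c = upd i ((loc c i)\<lparr>wsync := (wsync (loc c i))(j := wsync (loc c i) j + 1)\<rparr>) c"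
  unfolding runW_def Let_def using ji y y1
  by (simp add: upd_def send_def)

lemma idinv_netdel:
  assumes I: "idinv n c"
  shows "idinv n (c\<lparr>net := net c - X\<rparr>)"
proof (rule idinvI, goal_cases)
  case 1 then show ?case using idinvD(1)[OF I] by (simp, metis)
next case 2 then show ?case using idinvD(2)[OF I] by (simp, metis)
next case 3 then show ?case using idinvD(3)[OF I] by simp
next case 4 then show ?case using idinvD(4)[OF I] by simp
next case 5 then show ?case using idinvD(5)[OF I] by simp
next case 6 then show ?case using idinvD(6,7)[OF I] by (simp, meson)
next case (7 m s d b v) then have "(m,s,d,WRITE b v) \<in> net c" by simp
    then show ?case by (rule idinvD(8)[OF I])
next case 8 then show ?case using idinvD(9,10)[OF I] by simp
next case 9 then show ?case using idinvD(11)[OF I] by simp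
qed

lemma idinv_ins:
  assumes I: "idinv n c" and M: "(mid, x0) \<in> net c"
    and H1: "\<And>j b v. hh = HW j b v \<Longrightarrow> j \<in> {1..n} \<and> j \<noteq> p"
    and H2: "\<And>j sn. hh = HR j sn \<Longrightarrow> j \<in> {1..n}"
  shows "idinv n (upd p ((loc c p)\<lparr>pend := insert (mid, hh) (pend (loc c p))\<rparr>) (c\<lparr>net := net c - {(mid, x0)}\<rparr>))"
    (is "idinv n ?c")
proof -
  have pe: "\<And>q. pend (loc ?c q) = (if q = p then insert (mid, hh) (pend (loc c p)) else pend (loc c q))"
    by simp
  have ne: "net ?c = net c - {(mid, x0)}" by simp
  have midc: "mid < cnt c" using idinvD(2)[OF I M] .
  have nopend: "\<And>q h. (mid, h) \<notin> pend (loc c q)" by (meson idinvD(4)[OF I] M)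
  have only: "\<And>x. (mid, x) \<in> net c \<Longrightarrow> x = x0" using idinvD(1)[OF I _ M] by blast
  show ?thesis
  proof (rule idinvI, goal_cases)
    case 1 then show ?case using idinvD(1)[OF I] by (simp, metis)
  next case 2 then show ?case using idinvD(2)[OF I] by (simp, metis)
  next case (3 m h q) then show ?case using idinvD(3)[OF I, of m h q] midc
      by (simp split: if_splits) blast
  next case (4 m h q x)
    show ?case
    proof (cases "m = mid")
      case True then show ?thesis using only by (simp only: ne) blast
    next
      case False
      then have "(m, h) \<in> pend (loc c q)" using 4 by (simp split: if_splits)
      then show ?thesis using idinvD(4)[OF I] by (simp only: ne) blast
    qed
  next case (5 m h h' q)
    then show ?case using idinvD(5)[OF I, of m h q h'] nopend by (simp split: if_splits) blast+
  next case 6 then show ?case using idinvD(6,7)[OF I] by (simp, meson)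
  next case (7 m s d b v) then have "(m,s,d,WRITE b v) \<in> net c" by simp
    then show ?case by (rule idinvD(8)[OF I])
  next case (8 m j b v q) then show ?case using idinvD(9,10)[OF I, of m j b v q] H1
      by (simp split: if_splits) blast+
  next case (9 m j sn q) then show ?case using idinvD(11)[OF I, of m j sn q] H2
      by (simp split: if_splits) blast+
  qed
qed

lemma idinv_deliver:
  assumes I: "idinv n c" and M: "(mid, src, dst, m) \<in> net c"
  shows "idinv n (recv mid src dst m (c\<lparr>net := net c - {(mid, src, dst, m)}\<rparr>))"
proof (cases m)
  case (WRITE b v)
  have "src \<in> {1..n}" "src \<noteq> dst" using idinvD(6,8)[OF I] M WRITE by blast+
  then show ?thesis using idinv_ins[OF I M, of "HW src b v" dst] WRITE
    by (simp add: recv_def Let_def)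
next
  case READ
  have "src \<in> {1..n}" using idinvD(6)[OF I] M by blast
  then show ?thesis using idinv_ins[OF I M, of "HR src (wsync (loc c dst) dst)" dst] READ
    by (simp add: recv_def Let_def)
next
  case PROCEED
  have "idinv n (c\<lparr>net := net c - {(mid, src, dst, m)}\<rparr>)" by (rule idinv_netdel[OF I])
  then show ?thesis using PROCEED unfolding recv_def
    by (simp add: idinv_upd Let_def)
qed

lemma idinv_crash: "idinv n c \<Longrightarrow> idinv n (c\<lparr>crashed := X\<rparr>)"
  unfolding idinv_def by simp

lemma idinv_runW:
  assumes I: "idinv n c" and i: "i \<in> {1..n}" and j: "j \<in> {1..n}" and ji: "j \<noteq> i"
  shows "idinv n (runW n i j v c)"
proof -
  let ?s = "loc c i"
  consider (A) "wsync ?s j = wsync ?s i" | (B) "wsync ?s j \<noteq> wsync ?s i" "wsync ?s j + 1 < wsync ?s i"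
    | (C) "wsync ?s j \<noteq> wsync ?s i" "\<not> wsync ?s j + 1 < wsync ?s i" by blast
  then show ?thesis
  proof cases
    case A
    show ?thesis unfolding runW_A[OF ji A]
      by (rule idinv_send[OF idinv_upd[OF I]]) (use i in auto)
  next
    case B
    show ?thesis unfolding runW_B[OF ji B(2)]
      by (rule idinv_send[OF idinv_upd[OF I]]) (use i j ji in auto)
  next
    case C
    show ?thesis unfolding runW_C[OF ji C]
      by (rule idinv_upd[OF I]) auto
  qed
qed

lemma step_idinv:
  assumes st: "step n t w c a c'" and w: "w \<in> {1..n}" and I: "idinv n c"
  shows "idinv n c'"
proof (cases a)
  case (InvWrite v)
  then show ?thesis using st unfolding step_def Let_def
    by (auto intro!: idinv_send idinv_upd I w)
next
  case RetWrite
  then show ?thesis using st unfolding step_def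
    by (auto intro!: idinv_upd I)
next
  case (InvRead i)
  then show ?thesis using st unfolding step_def Let_def
    by (auto intro!: idinv_send idinv_upd I)
next
  case (PassRead i)
  then show ?thesis using st unfolding step_def
    by (auto intro!: idinv_upd I)
next
  case (RetRead i)
  then show ?thesis using st unfolding step_def
    by (auto intro!: idinv_upd I)
next
  case (Deliver mid)
  then show ?thesis using st unfolding step_def
    by (auto intro!: idinv_deliver I)
next
  case (RunH i h)
  then obtain hh where i: "i \<in> {1..n}" and hm: "(h, hh) \<in> pend (loc c i)"
    and c': "(case hh of HW j b v \<Rightarrow> b = (wsync (loc c i) j + 1) mod 2 \<and>
                 c' = runW n i j v (upd i ((loc c i)\<lparr>pend := pend (loc c i) - {(h, hh)}\<rparr>) c)
             | HR j sn \<Rightarrow> wsync (loc c i) j \<ge> sn \<and>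
                 c' = send n i {j} PROCEED (upd i ((loc c i)\<lparr>pend := pend (loc c i) - {(h, hh)}\<rparr>) c))"
    using st unfolding step_def Let_def by auto
  have I0: "idinv n (upd i ((loc c i)\<lparr>pend := pend (loc c i) - {(h, hh)}\<rparr>) c)"
    by (rule idinv_upd[OF I]) auto
  show ?thesis
  proof (cases hh)
    case (HW j b v)
    have "j \<in> {1..n}" "j \<noteq> i" using idinvD(9,10)[OF I] hm HW by blast+
    then show ?thesis using c' HW idinv_runW[OF I0 i] by auto
  next
    case (HR j sn)
    have "j \<in> {1..n}" using idinvD(11)[OF I] hm HR by blast
    then have "idinv n (send n i {j} PROCEED (upd i ((loc c i)\<lparr>pend := pend (loc c i) - {(h, hh)}\<rparr>) c))"
      by (intro idinv_send[OF I0 i]) auto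
    then show ?thesis using c' HR by auto
  qed
next
  case (Crash i)
  then show ?thesis using st unfolding step_def
    by (auto intro!: idinv_crash I)
next
  case Skip
  then show ?thesis using st I unfolding step_def by simp
qed

lemma pair_frame:
  assumes "pairok c j i" and "\<And>x b. isW c' j i x b = isW c j i x b"
    and "V c' i j = V c i j" and "min (V c' j j) (V c' j i + 1) = min (V c j j) (V c j i + 1)"
  shows "pairok c' j i"
proof -
  have "isW c' j i = isW c j i" using assms(2) by (intro ext) simp
  then have "OW c' j i = OW c j i" unfolding OW_def by simp
  then show ?thesis using assms unfolding pairok_def by simp
qed

lemma pair_add:
  assumes P: "pairok c j i" and W: "\<And>x b. isW c' j i x b = (isW c j i x b \<or> (x = xz \<and> b = bz))"
    and xz: "xz \<notin> OW c j i" and fin: "finite (OW c j i)"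
    and Vy: "V c' i j = V c i j"
    and mn: "min (V c' j j) (V c' j i + 1) = min (V c j j) (V c j i + 1) + 1"
    and bz: "bz = (V c i j + card (OW c j i) + 1) mod 2"
    and le: "card (OW c j i) \<le> 1"
  shows "pairok c' j i"
proof -
  have OW': "OW c' j i = insert xz (OW c j i)" using W unfolding OW_def by auto
  have cd: "card (OW c' j i) = card (OW c j i) + 1" using OW' xz fin by simp
  have p1: "card (OW c j i) + V c i j = min (V c j j) (V c j i + 1)"
   and p2: "\<And>m b. isW c j i m b \<Longrightarrow> b = (V c i j + 1) mod 2 \<or> (b = (V c i j + 2) mod 2 \<and> card (OW c j i) = 2)"
   and p3: "\<And>m m' b. isW c j i m b \<Longrightarrow> isW c j i m' b \<Longrightarrow> m = m'"
    using P unfolding pairok_def by blast+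
  have old1: "\<And>m b. isW c j i m b \<Longrightarrow> card (OW c j i) = 1 \<and> b = (V c i j + 1) mod 2"
  proof -
    fix m b assume h: "isW c j i m b"
    then have "m \<in> OW c j i" unfolding OW_def by blast
    then have "card (OW c j i) \<ge> 1" using fin by (metis One_nat_def Suc_leI card_gt_0_iff empty_iff)
    then have "card (OW c j i) = 1" using le by simp
    then show "card (OW c j i) = 1 \<and> b = (V c i j + 1) mod 2" using p2[OF h] by simp
  qed
  have xzn: "\<And>b. \<not> isW c j i xz b" using xz unfolding OW_def by blast
  show ?thesis unfolding pairok_def
  proof (intro conjI allI impI)
    show "card (OW c' j i) + V c' i j = min (V c' j j) (V c' j i + 1)" using cd Vy mn p1 by simp
  next
    fix m b assume "isW c' j i m b"
    then consider "isW c j i m b" | "m = xz" "b = bz" using W by blast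
    then show "b = (V c' i j + 1) mod 2 \<or> (b = (V c' i j + 2) mod 2 \<and> card (OW c' j i) = 2)"
    proof cases
      case 1 then show ?thesis using old1 Vy by simp
    next
      case 2
      show ?thesis
      proof (cases "card (OW c j i) = 0")
        case True then show ?thesis using 2 bz Vy by simp
      next
        case False then have "card (OW c j i) = 1" using le by simp
        then show ?thesis using 2 bz Vy cd by simp
      qed
    qed
  next
    fix m m' b assume h1: "isW c' j i m b" and h2: "isW c' j i m' b"
    have diff: "\<And>m. isW c j i m bz \<Longrightarrow> False"
    proof -
      fix m assume "isW c j i m bz"
      then have "card (OW c j i) = 1" "bz = (V c i j + 1) mod 2" using old1 by blast+
      then show False using bz by (simp add: mod_Suc split: if_split_asm)
    qed
    show "m = m'"
      using h1 h2 W p3 diff by metis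
  qed
qed

lemma pair_rem:
  assumes P: "pairok c j i" and W: "\<And>x b. isW c' j i x b = (isW c j i x b \<and> x \<noteq> h)"
    and h: "isW c j i h bz" and bz: "bz = (V c i j + 1) mod 2" and fin: "finite (OW c j i)"
    and Vy: "V c' i j = V c i j + 1"
    and mn: "min (V c' j j) (V c' j i + 1) = min (V c j j) (V c j i + 1)"
  shows "pairok c' j i"
proof -
  have OW': "OW c' j i = OW c j i - {h}" using W unfolding OW_def by auto
  have hin: "h \<in> OW c j i" using h unfolding OW_def by blast
  have cd: "card (OW c' j i) + 1 = card (OW c j i)" using OW' hin fin
    by (metis One_nat_def Suc_pred add.commute card_Diff_singleton card_gt_0_iff empty_iff plus_1_eq_Suc)
  have p1: "card (OW c j i) + V c i j = min (V c j j) (V c j i + 1)"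
   and p2: "\<And>m b. isW c j i m b \<Longrightarrow> b = (V c i j + 1) mod 2 \<or> (b = (V c i j + 2) mod 2 \<and> card (OW c j i) = 2)"
   and p3: "\<And>m m' b. isW c j i m b \<Longrightarrow> isW c j i m' b \<Longrightarrow> m = m'"
    using P unfolding pairok_def by blast+
  show ?thesis unfolding pairok_def
  proof (intro conjI allI impI)
    show "card (OW c' j i) + V c' i j = min (V c' j j) (V c' j i + 1)" using cd Vy mn p1 by simp
  next
    fix m b assume "isW c' j i m b"
    then have m: "isW c j i m b" "m \<noteq> h" using W by blast+
    have "b \<noteq> bz" using p3[OF m(1)] h m(2) by blast
    then have "b = (V c i j + 2) mod 2" using p2[OF m(1)] bz by blast
    then show "b = (V c' i j + 1) mod 2 \<or> (b = (V c' i j + 2) mod 2 \<and> card (OW c' j i) = 2)"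
      using Vy by simp
  next
    fix m m' b assume "isW c' j i m b" "isW c' j i m' b"
    then show "m = m'" using W p3 by blast
  qed
qed

lemma OW_lt: "idinv n c \<Longrightarrow> x \<in> OW c j i \<Longrightarrow> x < cnt c"
  unfolding OW_def isW_def by (auto dest: idinvD(2,3))

lemma isW_upd_same: "pend s = pend (loc c p) \<Longrightarrow> isW (upd p s c) j i x b = isW c j i x b"
  unfolding isW_def by auto

lemma isW_sendW: "isW (send n p S (WRITE b0 v) c) j i x b \<longleftrightarrow>
   isW c j i x b \<or> (j = p \<and> i \<in> S \<and> x = cnt c + i \<and> b = b0)"
  unfolding isW_send by auto

lemma isW_sendNW: "(\<And>b v. m \<noteq> WRITE b v) \<Longrightarrow> isW (send n p S m c) j i x b = isW c j i x b"
  unfolding isW_send by auto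

lemma isW_crash: "isW (c\<lparr>crashed := X\<rparr>) j i x b = isW c j i x b"
  unfolding isW_def by simp

lemma isW_deliver:
  assumes M: "(mid, src, dst, m) \<in> net c"
  shows "isW (recv mid src dst m (c\<lparr>net := net c - {(mid, src, dst, m)}\<rparr>)) j i x b = isW c j i x b"
    (is "isW ?c' j i x b = _")
proof (cases m)
  case (WRITE b' v')
  have ne: "net ?c' = net c - {(mid, src, dst, m)}" by (simp add: recv_def WRITE Let_def)
  have pe: "pend (loc ?c' i) = (if i = dst then insert (mid, HW src b' v') (pend (loc c i)) else pend (loc c i))"
    by (simp add: recv_def WRITE Let_def)
  show ?thesis
  proof
    assume "isW ?c' j i x b"
    then consider v where "(x, j, i, WRITE b v) \<in> net ?c'" | v where "(x, HW j b v) \<in> pend (loc ?c' i)"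
      unfolding isW_def by blast
    then show "isW c j i x b"
    proof cases
      case (1 v) then show ?thesis unfolding isW_def ne by blast
    next
      case (2 v)
      show ?thesis
      proof (cases "i = dst \<and> (x, HW j b v) = (mid, HW src b' v')")
        case True
        then have "(x, j, i, WRITE b v) \<in> net c" using M WRITE by simp
        then show ?thesis unfolding isW_def by blast
      next
        case False
        then have "(x, HW j b v) \<in> pend (loc c i)" using 2 pe by (auto split: if_splits)
        then show ?thesis unfolding isW_def by blast
      qed
    qed
  next
    assume "isW c j i x b"
    then consider v where "(x, j, i, WRITE b v) \<in> net c" | v where "(x, HW j b v) \<in> pend (loc c i)"
      unfolding isW_def by blast
    then show "isW ?c' j i x b"
    proof cases
      case (1 v)
      show ?thesis
      proof (cases "(x, j, i, WRITE b v) = (mid, src, dst, m)")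
        case True
        then have "(x, HW j b v) \<in> pend (loc ?c' i)" using pe WRITE by simp
        then show ?thesis unfolding isW_def by blast
      next
        case False
        then have "(x, j, i, WRITE b v) \<in> net ?c'" using 1 ne by simp
        then show ?thesis unfolding isW_def by blast
      qed
    next
      case (2 v)
      then have "(x, HW j b v) \<in> pend (loc ?c' i)" using pe by (cases "i = dst") simp_all
      then show ?thesis unfolding isW_def by blast
    qed
  qed
next
  case READ
  have ne: "net ?c' = net c - {(mid, src, dst, m)}" by (simp add: recv_def READ Let_def)
  have pe: "pend (loc ?c' i) = (if i = dst then insert (mid, HR src (wsync (loc c dst) dst)) (pend (loc c i)) else pend (loc c i))"
    by (simp add: recv_def READ Let_def)
  have "\<And>v. (x, j, i, WRITE b v) \<in> net ?c' \<longleftrightarrow> (x, j, i, WRITE b v) \<in> net c" using ne READ by auto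
  moreover have "\<And>v. (x, HW j b v) \<in> pend (loc ?c' i) \<longleftrightarrow> (x, HW j b v) \<in> pend (loc c i)" using pe by auto
  ultimately show ?thesis unfolding isW_def by simp
next
  case PROCEED
  have ne: "net ?c' = net c - {(mid, src, dst, m)}" by (simp add: recv_def PROCEED Let_def)
  have pe: "pend (loc ?c' i) = pend (loc c i)"
    by (simp add: recv_def PROCEED Let_def)
  have "\<And>v. (x, j, i, WRITE b v) \<in> net ?c' \<longleftrightarrow> (x, j, i, WRITE b v) \<in> net c" using ne PROCEED by auto
  then show ?thesis unfolding isW_def pe by simp
qed

lemma isW_rem:
  assumes I: "idinv n c" and H: "(h, hh) \<in> pend (loc c i0)"
  shows "isW (upd i0 ((loc c i0)\<lparr>pend := pend (loc c i0) - {(h, hh)}\<rparr>) c) j i x b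
     \<longleftrightarrow> isW c j i x b \<and> \<not> (i = i0 \<and> x = h)"
proof -
  have nn: "\<And>y. (h, y) \<notin> net c" using idinvD(4)[OF I H] .
  have un: "\<And>hh'. (h, hh') \<in> pend (loc c i0) \<Longrightarrow> hh' = hh" using idinvD(5)[OF I _ H] by blast
  show ?thesis unfolding isW_def using nn un by auto
qed

lemma cinvD:
  assumes "cinv n c"
  shows "p \<in> {1..n} \<Longrightarrow> q \<in> {1..n} \<Longrightarrow> V c p q \<le> V c p p"
    and "i \<in> {1..n} \<Longrightarrow> j \<in> {1..n} \<Longrightarrow> j \<noteq> i \<Longrightarrow> pairok c j i"
  using assms unfolding cinv_def by blast+

lemma pairokD:
  assumes "pairok c j i"
  shows "card (OW c j i) + V c i j = min (V c j j) (V c j i + 1)"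
  using assms unfolding pairok_def by blast

lemma cinv_frame:
  assumes C: "cinv n c" and W: "\<And>j i x b. isW c' j i x b = isW c j i x b"
    and VV: "\<And>p q. V c' p q = V c p q"
  shows "cinv n c'"
  unfolding cinv_def
proof (intro conjI allI impI)
  fix p q assume "p \<in> {1..n}" "q \<in> {1..n}"
  then show "V c' p q \<le> V c' p p" using cinvD(1)[OF C] VV by simp
next
  fix i j assume "i \<in> {1..n}" "j \<in> {1..n}" "j \<noteq> i"
  then show "pairok c' j i" using cinvD(2)[OF C] pair_frame W VV by metis
qed

lemma card_le1_from:
  assumes "pairok c w i" "pairok c i w" "V c w i = V c w w"
  shows "card (OW c w i) \<le> 1" "card (OW c w i) + V c i w = V c w w"
proof -
  have a: "card (OW c w i) + V c i w = min (V c w w) (V c w i + 1)" using pairokD[OF assms(1)] .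
  have b: "card (OW c i w) + V c w i = min (V c i i) (V c i w + 1)" using pairokD[OF assms(2)] .
  show "card (OW c w i) + V c i w = V c w w" using a assms(3) by simp
  show "card (OW c w i) \<le> 1" using a b assms(3) by simp
qed

lemma cinv_invwrite:
  assumes I: "idinv n c" and C: "cinv n c" and w: "w \<in> {1..n}"
    and ws: "wsync s' = (wsync (loc c w))(w := V c w w + 1)"
    and ps: "pend s' = pend (loc c w)"
    and c': "c' = send n w {j \<in> {1..n}. wsync s' j = V c w w + 1 - 1} (WRITE ((V c w w + 1) mod 2) v) (upd w s' c)"
  shows "cinv n c'"
proof -
  define a where "a = V c w w"
  define L where "L = {j \<in> {1..n}. j \<noteq> w \<and> V c w j = a}"
  have Leq: "{j \<in> {1..n}. wsync s' j = V c w w + 1 - 1} = L" unfolding L_def a_def ws by auto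
  have c'2: "c' = send n w L (WRITE ((a + 1) mod 2) v) (upd w s' c)" using c' Leq a_def by simp
  have VV: "\<And>p q. V c' p q = (if p = w then (if q = w then a + 1 else V c w q) else V c p q)"
    unfolding c'2 using ws a_def by simp
  have WW: "\<And>j i x b. isW c' j i x b \<longleftrightarrow> isW c j i x b \<or> (j = w \<and> i \<in> L \<and> x = cnt c + i \<and> b = (a + 1) mod 2)"
    unfolding c'2 isW_sendW isW_upd_same[OF ps] by simp
  show ?thesis unfolding cinv_def
  proof (intro conjI allI impI)
    fix p q assume "p \<in> {1..n}" "q \<in> {1..n}"
    then show "V c' p q \<le> V c' p p" using cinvD(1)[OF C] VV a_def by fastforce
  next
    fix i j assume i: "i \<in> {1..n}" and j: "j \<in> {1..n}" and ji: "j \<noteq> i"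
    have P: "pairok c j i" using cinvD(2)[OF C i j ji] .
    consider (add) "j = w" "i \<in> L" | (nadd) "j = w" "i \<notin> L" | (other) "j \<noteq> w" by blast
    then show "pairok c' j i"
    proof cases
      case add
      have iL: "V c w i = a" "i \<noteq> w" using add(2) unfolding L_def by auto
      have P2: "pairok c i w" using cinvD(2)[OF C w i] iL(2) .
      have cl: "card (OW c w i) \<le> 1" "card (OW c w i) + V c i w = a"
        using card_le1_from[OF P[unfolded add(1)] P2] iL a_def by auto
      show ?thesis unfolding add(1)
      proof (rule pair_add[OF P[unfolded add(1)], where xz = "cnt c + i" and bz = "(a + 1) mod 2"])
        show "\<And>x b. isW c' w i x b = (isW c w i x b \<or> x = cnt c + i \<and> b = (a + 1) mod 2)"
          using WW add by auto
        show "cnt c + i \<notin> OW c w i" using OW_lt[OF I] by fastforce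
        show "finite (OW c w i)" using OW_finite[OF I] .
        show "V c' i w = V c i w" using VV iL by simp
        show "min (V c' w w) (V c' w i + 1) = min (V c w w) (V c w i + 1) + 1"
          using VV iL a_def by simp
        show "(a + 1) mod 2 = (V c i w + card (OW c w i) + 1) mod 2" using cl(2) by (simp add: add.commute)
        show "card (OW c w i) \<le> 1" using cl by simp
      qed
    next
      case nadd
      have "V c w i \<noteq> a" using nadd i ji unfolding L_def by auto
      moreover have "V c w i \<le> a" using cinvD(1)[OF C w i] a_def by simp
      ultimately have lt: "V c w i < a" by simp
      show ?thesis
      proof (rule pair_frame[OF P])
        show "\<And>x b. isW c' j i x b = isW c j i x b" using WW nadd by auto
        show "V c' i j = V c i j" using VV ji nadd by simp
        show "min (V c' j j) (V c' j i + 1) = min (V c j j) (V c j i + 1)"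
          using VV nadd ji lt a_def by simp
      qed
    next
      case other
      show ?thesis
      proof (rule pair_frame[OF P])
        show "\<And>x b. isW c' j i x b = isW c j i x b" using WW other by auto
        show "V c' i j = V c i j" using VV other by simp
        show "min (V c' j j) (V c' j i + 1) = min (V c j j) (V c j i + 1)"
          using VV other by simp
      qed
    qed
  qed
qed

lemma isW_h_sender:
  assumes I: "idinv n c" and H: "(h, HW j0 b0 v0) \<in> pend (loc c i0)" and W: "isW c j i0 h b"
  shows "j = j0"
proof -
  have nn: "\<And>y. (h, y) \<notin> net c" using idinvD(4)[OF I H] .
  then obtain v where "(h, HW j b v) \<in> pend (loc c i0)" using W unfolding isW_def by blast
  then have "HW j b v = HW j0 b0 v0" using idinvD(5)[OF I _ H] by blast
  then show ?thesis by simp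
qed

lemma cinv_gen:
  assumes I: "idinv n c" and C: "cinv n c" and i0: "i0 \<in> {1..n}"
    and H: "(h, HW j0 b0 v0) \<in> pend (loc c i0)" and b0: "b0 = (V c i0 j0 + 1) mod 2"
    and VV: "\<And>p q. V c' p q = (if p = i0 then f q else V c p q)"
    and WW: "\<And>j i x b. isW c' j i x b \<longleftrightarrow> (isW c j i x b \<and> \<not> (i = i0 \<and> x = h)) \<or>
                 (j = i0 \<and> i \<in> S \<and> x = cnt c + i \<and> b = bb i)"
    and Sr: "S \<subseteq> {1..n} - {i0}"
    and fj0: "f j0 = V c i0 j0 + 1"
    and fo: "\<And>q. q \<noteq> i0 \<Longrightarrow> q \<noteq> j0 \<Longrightarrow> f q = V c i0 q"
    and Hadd: "\<And>i. i \<in> S \<Longrightarrow> min (f i0) (f i + 1) = min (V c i0 i0) (V c i0 i + 1) + 1 \<and>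
                  bb i = (V c i i0 + card (OW c i0 i) + 1) mod 2 \<and> card (OW c i0 i) \<le> 1"
    and Hfr: "\<And>i. i \<in> {1..n} \<Longrightarrow> i \<notin> S \<Longrightarrow> i \<noteq> i0 \<Longrightarrow>
                  min (f i0) (f i + 1) = min (V c i0 i0) (V c i0 i + 1)"
    and H0: "\<And>q. q \<in> {1..n} \<Longrightarrow> f q \<le> f i0"
  shows "cinv n c'"
proof -
  have j0: "j0 \<in> {1..n}" "j0 \<noteq> i0" using idinvD(9,10)[OF I H] by auto
  show ?thesis unfolding cinv_def
  proof (intro conjI allI impI)
    fix p q assume "p \<in> {1..n}" "q \<in> {1..n}"
    then show "V c' p q \<le> V c' p p" using cinvD(1)[OF C] VV H0 by simp
  next
    fix i j assume i: "i \<in> {1..n}" and j: "j \<in> {1..n}" and ji: "j \<noteq> i"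
    have P: "pairok c j i" using cinvD(2)[OF C i j ji] .
    consider (rem) "i = i0" "j = j0" | (recv) "i = i0" "j \<noteq> j0" | (add) "j = i0" "i \<in> S"
      | (nadd) "j = i0" "i \<notin> S" | (other) "i \<noteq> i0" "j \<noteq> i0" by blast
    then show "pairok c' j i"
    proof cases
      case rem
      show ?thesis unfolding rem
      proof (rule pair_rem[OF P[unfolded rem], where h = h and bz = b0])
        show "\<And>x b. isW c' j0 i0 x b = (isW c j0 i0 x b \<and> x \<noteq> h)" using WW j0 by auto
        show "isW c j0 i0 h b0" unfolding isW_def using H by blast
        show "b0 = (V c i0 j0 + 1) mod 2" by (rule b0)
        show "finite (OW c j0 i0)" by (rule OW_finite[OF I])
        show "V c' i0 j0 = V c i0 j0 + 1" using VV fj0 by simp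
        show "min (V c' j0 j0) (V c' j0 i0 + 1) = min (V c j0 j0) (V c j0 i0 + 1)" using VV j0 by simp
      qed
    next
      case recv
      show ?thesis
      proof (rule pair_frame[OF P])
        have "\<And>b. \<not> isW c j i0 h b" using isW_h_sender[OF I H] recv by blast
        then show "\<And>x b. isW c' j i x b = isW c j i x b" using WW recv ji by auto
        show "V c' i j = V c i j" using VV fo recv ji by simp
        show "min (V c' j j) (V c' j i + 1) = min (V c j j) (V c j i + 1)" using VV recv ji by simp
      qed
    next
      case add
      have Ha: "min (f i0) (f i + 1) = min (V c i0 i0) (V c i0 i + 1) + 1"
        "bb i = (V c i i0 + card (OW c i0 i) + 1) mod 2" "card (OW c i0 i) \<le> 1"
        using Hadd[OF add(2)] by blast+
      have ii0: "i \<noteq> i0" using add Sr by auto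
      show ?thesis unfolding add(1)
      proof (rule pair_add[OF P[unfolded add(1)], where xz = "cnt c + i" and bz = "bb i"])
        show "\<And>x b. isW c' i0 i x b = (isW c i0 i x b \<or> x = cnt c + i \<and> b = bb i)"
          using WW add ii0 by auto
        show "cnt c + i \<notin> OW c i0 i" using OW_lt[OF I] by fastforce
        show "finite (OW c i0 i)" using OW_finite[OF I] .
        show "V c' i i0 = V c i i0" using VV ii0 by simp
        show "min (V c' i0 i0) (V c' i0 i + 1) = min (V c i0 i0) (V c i0 i + 1) + 1"
          using VV Ha(1) by simp
      qed (use Ha in auto)
    next
      case nadd
      show ?thesis
      proof (rule pair_frame[OF P])
        show "\<And>x b. isW c' j i x b = isW c j i x b" using WW nadd ji by auto
        show "V c' i j = V c i j" using VV ji nadd by simp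
        show "min (V c' j j) (V c' j i + 1) = min (V c j j) (V c j i + 1)"
          using VV nadd ji Hfr[OF i] by simp
      qed
    next
      case other
      show ?thesis
      proof (rule pair_frame[OF P])
        show "\<And>x b. isW c' j i x b = isW c j i x b" using WW other by auto
        show "V c' i j = V c i j" using VV other by simp
        show "min (V c' j j) (V c' j i + 1) = min (V c j j) (V c j i + 1)" using VV other by simp
      qed
    qed
  qed
qed

lemma cinv_runHW:
  assumes I: "idinv n c" and C: "cinv n c" and i0: "i0 \<in> {1..n}"
    and H: "(h, HW j0 b0 v0) \<in> pend (loc c i0)" and b0: "b0 = (V c i0 j0 + 1) mod 2"
    and c': "c' = runW n i0 j0 v0 (upd i0 ((loc c i0)\<lparr>pend := pend (loc c i0) - {(h, HW j0 b0 v0)}\<rparr>) c)"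
  shows "cinv n c'"
proof -
  define c0 where "c0 = upd i0 ((loc c i0)\<lparr>pend := pend (loc c i0) - {(h, HW j0 b0 v0)}\<rparr>) c"
  have j0: "j0 \<in> {1..n}" "j0 \<noteq> i0" using idinvD(9,10)[OF I H] by auto
  define y where "y = V c i0 j0"
  define a where "a = V c i0 i0"
  have ws0: "wsync (loc c0 i0) = wsync (loc c i0)" "hist (loc c0 i0) = hist (loc c i0)"
    unfolding c0_def by simp_all
  have V0: "\<And>p q. V c0 p q = V c p q" unfolding c0_def by simp
  have cnt0: "cnt c0 = cnt c" unfolding c0_def by simp
  have W0: "\<And>j i x b. isW c0 j i x b \<longleftrightarrow> isW c j i x b \<and> \<not> (i = i0 \<and> x = h)"
    unfolding c0_def by (rule isW_rem[OF I H])
  have ya: "y \<le> a" using cinvD(1)[OF C i0 j0(1)] y_def a_def by simp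
  have Pj0: "pairok c j0 i0" using cinvD(2)[OF C i0 j0(1) j0(2)] .
  have Pi0: "pairok c i0 j0" using cinvD(2)[OF C j0(1) i0] j0(2) by simp
  have hO: "h \<in> OW c j0 i0" unfolding OW_def isW_def using H by blast
  have cpos: "card (OW c j0 i0) \<ge> 1" using hO OW_finite[OF I]
    by (metis One_nat_def Suc_leI card_gt_0_iff empty_iff)
  have yle: "y \<le> V c j0 i0" using pairokD[OF Pj0] cpos y_def by simp
  have c'0: "c' = runW n i0 j0 v0 c0" using c' c0_def by simp
  consider (A) "y = a" | (B) "y \<noteq> a" "y + 1 < a" | (Cc) "y \<noteq> a" "\<not> y + 1 < a" by blast
  then show ?thesis
  proof cases
    case A
    define L where "L = {l \<in> {1..n}. l \<noteq> i0 \<and> V c i0 l = a}"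
    define s'' where "s'' = (loc c0 i0)\<lparr>hist := (hist (loc c0 i0))(wsync (loc c0 i0) i0 + 1 := v0),
                  wsync := (wsync (loc c0 i0))(i0 := wsync (loc c0 i0) i0 + 1, j0 := wsync (loc c0 i0) i0 + 1)\<rparr>"
    have eq: "c' = send n i0 L (WRITE ((a + 1) mod 2) v0) (upd i0 s'' c0)"
      unfolding c'0 s''_def L_def
      using runW_A[of j0 i0 c0 n v0] j0(2) A ws0 y_def a_def by simp
    have ps: "pend s'' = pend (loc c0 i0)" unfolding s''_def by simp
    have j0L: "j0 \<in> L" unfolding L_def using j0 A y_def by simp
    show ?thesis
    proof (rule cinv_gen[OF I C i0 H b0, where f = "(wsync (loc c i0))(i0 := a + 1, j0 := a + 1)"
          and S = L and bb = "\<lambda>_. (a + 1) mod 2"])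
      show "\<And>p q. V c' p q = (if p = i0 then ((wsync (loc c i0))(i0 := a + 1, j0 := a + 1)) q else V c p q)"
        unfolding eq s''_def using ws0 a_def V0 by simp
      show "\<And>j i x b. isW c' j i x b \<longleftrightarrow> (isW c j i x b \<and> \<not> (i = i0 \<and> x = h)) \<or>
                 (j = i0 \<and> i \<in> L \<and> x = cnt c + i \<and> b = (a + 1) mod 2)"
        unfolding eq isW_sendW isW_upd_same[OF ps] W0 by (simp add: cnt0)
      show "L \<subseteq> {1..n} - {i0}" unfolding L_def by auto
      show "((wsync (loc c i0))(i0 := a + 1, j0 := a + 1)) j0 = V c i0 j0 + 1" using A y_def by simp
      show "\<And>q. q \<noteq> i0 \<Longrightarrow> q \<noteq> j0 \<Longrightarrow> ((wsync (loc c i0))(i0 := a + 1, j0 := a + 1)) q = V c i0 q"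
        by simp
    next
      fix i assume iL: "i \<in> L"
      have iL2: "i \<in> {1..n}" "i \<noteq> i0" "V c i0 i = a" using iL unfolding L_def by auto
      have cl: "card (OW c i0 i) \<le> 1" "card (OW c i0 i) + V c i i0 = V c i0 i0"
        using card_le1_from[OF cinvD(2)[OF C iL2(1) i0] cinvD(2)[OF C i0 iL2(1)]] iL2 a_def by auto
      show "min (((wsync (loc c i0))(i0 := a + 1, j0 := a + 1)) i0) (((wsync (loc c i0))(i0 := a + 1, j0 := a + 1)) i + 1)
             = min (V c i0 i0) (V c i0 i + 1) + 1 \<and>
            (a + 1) mod 2 = (V c i i0 + card (OW c i0 i) + 1) mod 2 \<and> card (OW c i0 i) \<le> 1"
        using iL2 cl a_def j0 by (simp add: add.commute)
    next
      fix i assume i: "i \<in> {1..n}" "i \<notin> L" "i \<noteq> i0"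
      have "V c i0 i \<noteq> a" using i unfolding L_def by auto
      moreover have "V c i0 i \<le> a" using cinvD(1)[OF C i0 i(1)] a_def by simp
      moreover have "i \<noteq> j0" using i j0L by auto
      ultimately show "min (((wsync (loc c i0))(i0 := a + 1, j0 := a + 1)) i0) (((wsync (loc c i0))(i0 := a + 1, j0 := a + 1)) i + 1)
             = min (V c i0 i0) (V c i0 i + 1)" using i a_def j0(2) by simp
    next
      fix q assume "q \<in> {1..n}"
      then show "((wsync (loc c i0))(i0 := a + 1, j0 := a + 1)) q \<le> ((wsync (loc c i0))(i0 := a + 1, j0 := a + 1)) i0"
        using cinvD(1)[OF C i0, of q] a_def j0(2) by simp
    qed
  next
    case B
    define s'' where "s'' = (loc c0 i0)\<lparr>wsync := (wsync (loc c0 i0))(j0 := wsync (loc c0 i0) j0 + 1)\<rparr>"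
    have eq: "c' = send n i0 {j0} (WRITE ((y + 2) mod 2) (hist (loc c i0) (y + 2))) (upd i0 s'' c0)"
      unfolding c'0 s''_def
      using runW_B[of j0 i0 c0 n v0] j0(2) B ws0 y_def a_def by simp
    have ps: "pend s'' = pend (loc c0 i0)" unfolding s''_def by simp
    have cl: "card (OW c i0 j0) + V c j0 i0 = y + 1" using pairokD[OF Pi0] B y_def a_def by simp
    show ?thesis
    proof (rule cinv_gen[OF I C i0 H b0, where f = "(wsync (loc c i0))(j0 := y + 1)"
          and S = "{j0}" and bb = "\<lambda>_. (y + 2) mod 2"])
      show "\<And>p q. V c' p q = (if p = i0 then ((wsync (loc c i0))(j0 := y + 1)) q else V c p q)"
        unfolding eq s''_def using ws0 y_def V0 by simp
      show "\<And>j i x b. isW c' j i x b \<longleftrightarrow> (isW c j i x b \<and> \<not> (i = i0 \<and> x = h)) \<or>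
                 (j = i0 \<and> i \<in> {j0} \<and> x = cnt c + i \<and> b = (y + 2) mod 2)"
        unfolding eq isW_sendW isW_upd_same[OF ps] W0 by (simp add: cnt0)
      show "{j0} \<subseteq> {1..n} - {i0}" using j0 by auto
      show "((wsync (loc c i0))(j0 := y + 1)) j0 = V c i0 j0 + 1" using y_def by simp
      show "\<And>q. q \<noteq> i0 \<Longrightarrow> q \<noteq> j0 \<Longrightarrow> ((wsync (loc c i0))(j0 := y + 1)) q = V c i0 q"
        by simp
    next
      fix i assume "i \<in> {j0}"
      then have ij: "i = j0" by simp
      show "min (((wsync (loc c i0))(j0 := y + 1)) i0) (((wsync (loc c i0))(j0 := y + 1)) i + 1)
             = min (V c i0 i0) (V c i0 i + 1) + 1 \<and>
            (y + 2) mod 2 = (V c i i0 + card (OW c i0 i) + 1) mod 2 \<and> card (OW c i0 i) \<le> 1"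
        using ij j0 B cl yle y_def a_def by (simp add: add.commute)
    next
      fix i assume i: "i \<in> {1..n}" "i \<notin> {j0}" "i \<noteq> i0"
      then show "min (((wsync (loc c i0))(j0 := y + 1)) i0) (((wsync (loc c i0))(j0 := y + 1)) i + 1)
             = min (V c i0 i0) (V c i0 i + 1)" using j0 by simp
    next
      fix q assume "q \<in> {1..n}"
      then show "((wsync (loc c i0))(j0 := y + 1)) q \<le> ((wsync (loc c i0))(j0 := y + 1)) i0"
        using cinvD(1)[OF C i0] a_def B j0 by simp
    qed
  next
    case Cc
    define s'' where "s'' = (loc c0 i0)\<lparr>wsync := (wsync (loc c0 i0))(j0 := wsync (loc c0 i0) j0 + 1)\<rparr>"
    have eq: "c' = upd i0 s'' c0"
      unfolding c'0 s''_def
      using runW_C[of j0 i0 c0 n v0] j0(2) Cc ws0 y_def a_def by simp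
    have ps: "pend s'' = pend (loc c0 i0)" unfolding s''_def by simp
    have ya1: "y + 1 = a" using Cc ya by simp
    show ?thesis
    proof (rule cinv_gen[OF I C i0 H b0, where f = "(wsync (loc c i0))(j0 := y + 1)"
          and S = "{}" and bb = "\<lambda>_. 0"])
      show "\<And>p q. V c' p q = (if p = i0 then ((wsync (loc c i0))(j0 := y + 1)) q else V c p q)"
        unfolding eq s''_def using ws0 y_def V0 by simp
      show "\<And>j i x b. isW c' j i x b \<longleftrightarrow> (isW c j i x b \<and> \<not> (i = i0 \<and> x = h)) \<or>
                 (j = i0 \<and> i \<in> {} \<and> x = cnt c + i \<and> b = 0)"
        unfolding eq isW_upd_same[OF ps] W0 by simp
      show "{} \<subseteq> {1..n} - {i0}" by simp
      show "((wsync (loc c i0))(j0 := y + 1)) j0 = V c i0 j0 + 1" using y_def by simp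
      show "\<And>q. q \<noteq> i0 \<Longrightarrow> q \<noteq> j0 \<Longrightarrow> ((wsync (loc c i0))(j0 := y + 1)) q = V c i0 q"
        by simp
    next
      fix i assume "i \<in> ({} :: nat set)" then show "min (((wsync (loc c i0))(j0 := y + 1)) i0) (((wsync (loc c i0))(j0 := y + 1)) i + 1)
             = min (V c i0 i0) (V c i0 i + 1) + 1 \<and>
            (\<lambda>_. 0::nat) i = (V c i i0 + card (OW c i0 i) + 1) mod 2 \<and> card (OW c i0 i) \<le> 1" by simp
    next
      fix i assume i: "i \<in> {1..n}" "i \<notin> {}" "i \<noteq> i0"
      show "min (((wsync (loc c i0))(j0 := y + 1)) i0) (((wsync (loc c i0))(j0 := y + 1)) i + 1)
             = min (V c i0 i0) (V c i0 i + 1)" using i j0 ya1 y_def a_def by auto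
    next
      fix q assume "q \<in> {1..n}"
      then show "((wsync (loc c i0))(j0 := y + 1)) q \<le> ((wsync (loc c i0))(j0 := y + 1)) i0"
        using cinvD(1)[OF C i0] a_def ya1 j0 by simp
    qed
  qed
qed

lemma step_cinv:
  assumes st: "step n t w c a c'" and w: "w \<in> {1..n}" and I: "idinv n c" and C: "cinv n c"
  shows "cinv n c'"
proof (cases a)
  case (InvWrite v)
  let ?s' = "(loc c w)\<lparr>wsync := (wsync (loc c w))(w := wsync (loc c w) w + 1),
      hist := (hist (loc c w))(wsync (loc c w) w + 1 := v), ost := Writing (wsync (loc c w) w + 1)\<rparr>"
  have c': "c' = send n w {j \<in> {1..n}. wsync ?s' j = V c w w + 1 - 1} (WRITE ((V c w w + 1) mod 2) v) (upd w ?s' c)"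
    using st InvWrite unfolding step_def Let_def by simp
  show ?thesis by (rule cinv_invwrite[OF I C w _ _ c']) simp_all
next
  case RetWrite
  then obtain s where eq: "c' = upd w s c" and ps: "pend s = pend (loc c w)" and ws: "wsync s = wsync (loc c w)"
    using st unfolding step_def by auto
  show ?thesis unfolding eq by (rule cinv_frame[OF C]) (simp_all add: isW_upd_same[OF ps] ws)
next
  case (InvRead i)
  let ?s' = "(loc c i)\<lparr>rsync := (rsync (loc c i))(i := rsync (loc c i) i + 1), ost := RdWait1 (rsync (loc c i) i + 1)\<rparr>"
  have c': "c' = send n i {j \<in> {1..n}. j \<noteq> i} READ (upd i ?s' c)"
    using st InvRead unfolding step_def Let_def by simp
  show ?thesis unfolding c'
    by (rule cinv_frame[OF C]) (simp_all add: isW_sendNW isW_upd_same)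
next
  case (PassRead i)
  then obtain s where eq: "c' = upd i s c" and ps: "pend s = pend (loc c i)" and ws: "wsync s = wsync (loc c i)"
    using st unfolding step_def by auto
  show ?thesis unfolding eq by (rule cinv_frame[OF C]) (simp_all add: isW_upd_same[OF ps] ws)
next
  case (RetRead i)
  then obtain s where eq: "c' = upd i s c" and ps: "pend s = pend (loc c i)" and ws: "wsync s = wsync (loc c i)"
    using st unfolding step_def by auto
  show ?thesis unfolding eq by (rule cinv_frame[OF C]) (simp_all add: isW_upd_same[OF ps] ws)
next
  case (Deliver mid)
  then obtain src dst m where M: "(mid, src, dst, m) \<in> net c"
    and c': "c' = recv mid src dst m (c\<lparr>net := net c - {(mid, src, dst, m)}\<rparr>)"
    using st unfolding step_def by auto
  have VV: "\<And>p q. V c' p q = V c p q" unfolding c' recv_def Let_def by (cases m) simp_all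
  show ?thesis by (rule cinv_frame[OF C]) (simp_all add: c' isW_deliver[OF M] VV[unfolded c'])
next
  case (RunH i h)
  then obtain hh where i: "i \<in> {1..n}" and hm: "(h, hh) \<in> pend (loc c i)"
    and c': "(case hh of HW j b v \<Rightarrow> b = (wsync (loc c i) j + 1) mod 2 \<and>
                 c' = runW n i j v (upd i ((loc c i)\<lparr>pend := pend (loc c i) - {(h, hh)}\<rparr>) c)
             | HR j sn \<Rightarrow> wsync (loc c i) j \<ge> sn \<and>
                 c' = send n i {j} PROCEED (upd i ((loc c i)\<lparr>pend := pend (loc c i) - {(h, hh)}\<rparr>) c))"
    using st unfolding step_def Let_def by auto
  show ?thesis
  proof (cases hh)
    case (HW j b v)
    then show ?thesis using c' cinv_runHW[OF I C i hm[unfolded HW]] by simp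
  next
    case (HR j sn)
    then have c'2: "c' = send n i {j} PROCEED (upd i ((loc c i)\<lparr>pend := pend (loc c i) - {(h, hh)}\<rparr>) c)"
      using c' by simp
    have nh: "\<And>j' b. \<not> isW c j' i h b"
    proof
      fix j' b assume "isW c j' i h b"
      moreover have "\<And>y. (h, y) \<notin> net c" using idinvD(4)[OF I hm] .
      ultimately obtain v where "(h, HW j' b v) \<in> pend (loc c i)" unfolding isW_def by blast
      then have "HW j' b v = hh" using idinvD(5)[OF I _ hm] by blast
      then show False using HR by simp
    qed
    have WW: "\<And>j' i' x b. isW c' j' i' x b = isW c j' i' x b"
      unfolding c'2 using nh by (auto simp: isW_sendNW isW_rem[OF I hm])
    have VV: "\<And>p q. V c' p q = V c p q" unfolding c'2 by simp
    show ?thesis using cinv_frame[OF C WW VV] .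
  qed
next
  case (Crash i)
  then have eq: "c' = c\<lparr>crashed := insert i (crashed c)\<rparr>" using st unfolding step_def by auto
  show ?thesis unfolding eq by (rule cinv_frame[OF C]) (simp_all add: isW_crash)
next
  case Skip
  then show ?thesis using st C unfolding step_def by simp
qed

lemma runW_pend: "pend (loc (runW n i j v c) p) = pend (loc c p)"
  unfolding runW_def Let_def by simp

lemma runW_V:
  assumes "j \<noteq> i"
  shows "V (runW n i j v c) i j = V c i j + 1"
    and "q \<noteq> i \<Longrightarrow> q \<noteq> j \<Longrightarrow> V (runW n i j v c) i q = V c i q"
    and "p \<noteq> i \<Longrightarrow> V (runW n i j v c) p q = V c p q"
  using assms unfolding runW_def Let_def by simp_all

lemma step_pend_keep:
  assumes st: "step n t w c a c'" and x: "(x, hh) \<in> pend (loc c p)" and a: "a \<noteq> RunH p x"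
  shows "(x, hh) \<in> pend (loc c' p)"
proof (cases a)
  case (RunH i h)
  then obtain hd0 where hm: "(h, hd0) \<in> pend (loc c i)"
    and c': "(case hd0 of HW j b v \<Rightarrow> b = (wsync (loc c i) j + 1) mod 2 \<and>
                 c' = runW n i j v (upd i ((loc c i)\<lparr>pend := pend (loc c i) - {(h, hd0)}\<rparr>) c)
             | HR j sn \<Rightarrow> wsync (loc c i) j \<ge> sn \<and>
                 c' = send n i {j} PROCEED (upd i ((loc c i)\<lparr>pend := pend (loc c i) - {(h, hd0)}\<rparr>) c))"
    using st unfolding step_def Let_def by auto
  have ne: "i = p \<Longrightarrow> h \<noteq> x" using a RunH by auto
  show ?thesis using c' x ne by (cases hd0) (auto simp: runW_pend)
next
  case (Deliver mid)
  then obtain src dst m where c': "c' = recv mid src dst m (c\<lparr>net := net c - {(mid, src, dst, m)}\<rparr>)"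
    using st unfolding step_def by auto
  show ?thesis using x unfolding c' recv_def Let_def by (cases m) auto
qed (use st x in \<open>auto simp: step_def Let_def\<close>)

lemma step_net_keep:
  assumes st: "step n t w c a c'" and x: "(m, y) \<in> net c" and a: "a \<noteq> Deliver m"
  shows "(m, y) \<in> net c'"
proof (cases a)
  case (RunH i h)
  then obtain hd0 where hm0: "(h, hd0) \<in> pend (loc c i)"
    and c': "(case hd0 of HW j b v \<Rightarrow> b = (wsync (loc c i) j + 1) mod 2 \<and>
                 c' = runW n i j v (upd i ((loc c i)\<lparr>pend := pend (loc c i) - {(h, hd0)}\<rparr>) c)
             | HR j sn \<Rightarrow> wsync (loc c i) j \<ge> sn \<and>
                 c' = send n i {j} PROCEED (upd i ((loc c i)\<lparr>pend := pend (loc c i) - {(h, hd0)}\<rparr>) c))"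
    using st unfolding step_def Let_def by auto
  have rn: "\<And>i j v c. (m, y) \<in> net c \<Longrightarrow> (m, y) \<in> net (runW n i j v c)" unfolding runW_def Let_def by auto
  show ?thesis
  proof (cases hd0)
    case (HW j b v)
    then show ?thesis using c' x rn[of "upd i ((loc c i)\<lparr>pend := pend (loc c i) - {(h, hd0)}\<rparr>) c" i j v] by simp
  next
    case (HR j sn)
    then show ?thesis using c' x by simp
  qed
next
  case (Deliver mid)
  then obtain src dst mm where c': "c' = recv mid src dst mm (c\<lparr>net := net c - {(mid, src, dst, mm)}\<rparr>)"
    using st unfolding step_def by auto
  have "mid \<noteq> m" using a Deliver by auto
  then show ?thesis using x unfolding c' recv_def Let_def by (cases mm) auto
qed (use st x in \<open>auto simp: step_def Let_def\<close>)

lemma step_RunH_E: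
  assumes "step n t w c (RunH i h) c'"
  obtains hd0 where "i \<in> {1..n}" "i \<notin> crashed c" "(h, hd0) \<in> pend (loc c i)"
    "(case hd0 of HW j b v \<Rightarrow> b = (wsync (loc c i) j + 1) mod 2 \<and>
                 c' = runW n i j v (upd i ((loc c i)\<lparr>pend := pend (loc c i) - {(h, hd0)}\<rparr>) c)
             | HR j sn \<Rightarrow> wsync (loc c i) j \<ge> sn \<and>
                 c' = send n i {j} PROCEED (upd i ((loc c i)\<lparr>pend := pend (loc c i) - {(h, hd0)}\<rparr>) c))"
  using assms unfolding step_def Let_def by auto

lemma step_runH_V:
  assumes st: "step n t w c (RunH i h) c'" and I: "idinv n c" and H: "(h, HW j b v) \<in> pend (loc c i)"
  shows "V c' i j = V c i j + 1"
proof -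
  obtain hd0 where hm: "(h, hd0) \<in> pend (loc c i)"
    and c': "(case hd0 of HW j b v \<Rightarrow> b = (wsync (loc c i) j + 1) mod 2 \<and>
                 c' = runW n i j v (upd i ((loc c i)\<lparr>pend := pend (loc c i) - {(h, hd0)}\<rparr>) c)
             | HR j sn \<Rightarrow> wsync (loc c i) j \<ge> sn \<and>
                 c' = send n i {j} PROCEED (upd i ((loc c i)\<lparr>pend := pend (loc c i) - {(h, hd0)}\<rparr>) c))"
    by (rule step_RunH_E[OF st])
  have "hd0 = HW j b v" using idinvD(5)[OF I hm H] .
  moreover have "j \<noteq> i" using idinvD(10)[OF I H] .
  ultimately show ?thesis using c' by (simp add: runW_V(1))
qed

lemma step_V:
  assumes st: "step n t w c a c'" and I: "idinv n c" and ji: "j \<noteq> i"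
  shows "V c' i j = V c i j \<or> (\<exists>h' b' v'. a = RunH i h' \<and> (h', HW j b' v') \<in> pend (loc c i) \<and>
            b' = (V c i j + 1) mod 2 \<and> V c' i j = V c i j + 1)"
proof (cases a)
  case (RunH i' h')
  obtain hd0 where hm: "(h', hd0) \<in> pend (loc c i')"
    and c': "(case hd0 of HW j b v \<Rightarrow> b = (wsync (loc c i') j + 1) mod 2 \<and>
                 c' = runW n i' j v (upd i' ((loc c i')\<lparr>pend := pend (loc c i') - {(h', hd0)}\<rparr>) c)
             | HR j sn \<Rightarrow> wsync (loc c i') j \<ge> sn \<and>
                 c' = send n i' {j} PROCEED (upd i' ((loc c i')\<lparr>pend := pend (loc c i') - {(h', hd0)}\<rparr>) c))"
    by (rule step_RunH_E[OF st[unfolded RunH]])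
  show ?thesis
  proof (cases hd0)
    case (HW j' b' v')
    have j'i': "j' \<noteq> i'" using idinvD(10)[OF I hm[unfolded HW]] .
    have c'2: "c' = runW n i' j' v' (upd i' ((loc c i')\<lparr>pend := pend (loc c i') - {(h', hd0)}\<rparr>) c)"
      and b': "b' = (V c i' j' + 1) mod 2" using c' HW by simp_all
    show ?thesis
    proof (cases "i' = i")
      case True
      show ?thesis
      proof (cases "j' = j")
        case True
        then show ?thesis using \<open>i' = i\<close> c'2 b' RunH hm HW j'i' by (auto simp add: runW_V(1))
      next
        case False
        then show ?thesis using \<open>i' = i\<close> c'2 j'i' ji by (simp add: runW_V(2))
      qed
    next
      case False
      then show ?thesis using c'2 j'i' by (simp add: runW_V(3))
    qed
  next
    case (HR j' sn)
    then show ?thesis using c' by simp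
  qed
next
  case (Deliver mid)
  then obtain src dst m where c': "c' = recv mid src dst m (c\<lparr>net := net c - {(mid, src, dst, m)}\<rparr>)"
    using st unfolding step_def by auto
  show ?thesis unfolding c' recv_def Let_def by (cases m) simp_all
qed (use st ji in \<open>auto simp: step_def Let_def\<close>)

lemma step_deliver_pend:
  assumes st: "step n t w c (Deliver m) c'" and I: "idinv n c" and M: "(m, j, i, WRITE b v) \<in> net c"
  shows "(m, HW j b v) \<in> pend (loc c' i)"
proof -
  obtain src dst mm where M2: "(m, src, dst, mm) \<in> net c"
    and c': "c' = recv m src dst mm (c\<lparr>net := net c - {(m, src, dst, mm)}\<rparr>)"
    using st unfolding step_def by auto
  have "(src, dst, mm) = (j, i, WRITE b v)" using idinvD(1)[OF I M2 M] .
  then show ?thesis unfolding c' recv_def Let_def by auto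
qed

lemma init_inv:
  assumes "init_conf v0 c"
  shows "idinv n c" "cinv n c"
proof -
  have ne: "net c = {}" and pe: "\<And>p. pend (loc c p) = {}" and ws: "\<And>p. wsync (loc c p) = (\<lambda>_. 0)"
    using assms unfolding init_conf_def by auto
  show "idinv n c" by (rule idinvI) (simp_all add: ne pe)
  have iw: "\<And>j i x b. \<not> isW c j i x b" unfolding isW_def by (simp add: ne pe)
  have ow: "\<And>j i. OW c j i = {}" unfolding OW_def using iw by simp
  show "cinv n c" unfolding cinv_def pairok_def by (simp add: ws ow iw)
qed

lemma run_inv:
  assumes R: "run n t w v0 \<rho> \<sigma>" and w: "w \<in> {1..n}"
  shows "idinv n (\<rho> k) \<and> cinv n (\<rho> k)"
proof (induction k)
  case 0
  have "init_conf v0 (\<rho> 0)" using R unfolding run_def by blast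
  then show ?case using init_inv(1)[of v0 "\<rho> 0" n] init_inv(2)[of v0 "\<rho> 0" n] by simp
next
  case (Suc k)
  have st: "step n t w (\<rho> k) (\<sigma> k) (\<rho> (Suc k))" using R unfolding run_def by blast
  then show ?case using Suc step_idinv[OF st w] step_cinv[OF st w] by blast
qed

lemma enabled_RunH:
  assumes "i \<in> {1..n}" "i \<notin> crashed c" "(h, HW j b v) \<in> pend (loc c i)" "b = (V c i j + 1) mod 2"
  shows "enabled n t w c (RunH i h)"
  unfolding enabled_def step_def Let_def
  using assms by (intro exI[of _ "runW n i j v (upd i ((loc c i)\<lparr>pend := pend (loc c i) - {(h, HW j b v)}\<rparr>) c)"]) auto

lemma L1:
  assumes R: "run n t w v0 \<rho> \<sigma>" and w: "w \<in> {1..n}" and cor: "correct n \<rho> i"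
    and H: "(h, HW j b v) \<in> pend (loc (\<rho> k) i)" and b: "b = (V (\<rho> k) i j + 1) mod 2"
  shows "\<exists>k' \<ge> k. \<sigma> k' = RunH i h \<and> (h, HW j b v) \<in> pend (loc (\<rho> k') i) \<and> V (\<rho> k') i j = V (\<rho> k) i j"
proof (rule ccontr)
  assume neg: "\<not> ?thesis"
  have st: "\<And>k. step n t w (\<rho> k) (\<sigma> k) (\<rho> (Suc k))" using R unfolding run_def by blast
  have INV: "\<And>k. idinv n (\<rho> k) \<and> cinv n (\<rho> k)" using run_inv[OF R w] by blast
  have i: "i \<in> {1..n}" and nc: "\<And>k. i \<notin> crashed (\<rho> k)" using cor unfolding correct_def by auto
  have j: "j \<in> {1..n}" "j \<noteq> i" using idinvD(9,10)[OF conjunct1[OF INV[of k]] H] by auto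
  define y where "y = V (\<rho> k) i j"
  have Q: "\<And>d. (h, HW j b v) \<in> pend (loc (\<rho> (k + d)) i) \<and> V (\<rho> (k + d)) i j = y"
  proof -
    fix d show "(h, HW j b v) \<in> pend (loc (\<rho> (k + d)) i) \<and> V (\<rho> (k + d)) i j = y"
    proof (induction d)
      case 0 then show ?case using H y_def by simp
    next
      case (Suc d)
      have nr: "\<sigma> (k + d) \<noteq> RunH i h" using neg Suc y_def by (metis le_add1)
      have p: "(h, HW j b v) \<in> pend (loc (\<rho> (k + Suc d)) i)"
        using step_pend_keep[OF st[of "k + d"] conjunct1[OF Suc] nr] by simp
      have "V (\<rho> (k + Suc d)) i j = y"
      proof (rule ccontr)
        assume ch: "V (\<rho> (k + Suc d)) i j \<noteq> y"
        have I: "idinv n (\<rho> (k + d))" and C: "cinv n (\<rho> (k + d))" using INV by blast+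
        from step_V[OF st[of "k + d"] I j(2)] ch Suc obtain h' b' v' where
          a: "\<sigma> (k + d) = RunH i h'" and hp: "(h', HW j b' v') \<in> pend (loc (\<rho> (k + d)) i)"
          and b': "b' = (y + 1) mod 2" by auto
        have P: "pairok (\<rho> (k + d)) j i" using cinvD(2)[OF C i j(1) j(2)] .
        have w1: "isW (\<rho> (k + d)) j i h b" unfolding isW_def using Suc by blast
        have w2: "isW (\<rho> (k + d)) j i h' b" unfolding isW_def using hp b' b y_def by blast
        have "h' = h" using P w1 w2 unfolding pairok_def by blast
        then show False using a nr by simp
      qed
      then show ?case using p by simp
    qed
  qed
  have en: "\<forall>k' \<ge> k. enabled n t w (\<rho> k') (RunH i h)"
  proof (intro allI impI)
    fix k' assume "k' \<ge> k"
    then obtain d where kd: "k' = k + d" using le_Suc_ex by blast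
    have q: "(h, HW j b v) \<in> pend (loc (\<rho> k') i)" "b = (V (\<rho> k') i j + 1) mod 2"
      using Q[of d] kd b y_def by simp_all
    show "enabled n t w (\<rho> k') (RunH i h)"
      by (rule enabled_RunH[OF i nc q])
  qed
  have la: "local_act w i (RunH i h)" unfolding local_act_def by blast
  have "\<exists>k' \<ge> k. \<sigma> k' = RunH i h" using R cor la en unfolding run_def by blast
  then obtain k' where k': "k' \<ge> k" "\<sigma> k' = RunH i h" by blast
  then obtain d where kd: "k' = k + d" using le_Suc_ex by blast
  show False using neg k' Q[of d] kd y_def by blast
qed

lemma L1':
  assumes R: "run n t w v0 \<rho> \<sigma>" and w: "w \<in> {1..n}" and cor: "correct n \<rho> i"
    and H: "(h, HW j b v) \<in> pend (loc (\<rho> k) i)" and b: "b = (V (\<rho> k) i j + 1) mod 2"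
  shows "\<exists>k' \<ge> k. V (\<rho> (Suc k')) i j = V (\<rho> k) i j + 1"
proof -
  obtain k' where k': "k' \<ge> k" "\<sigma> k' = RunH i h" "(h, HW j b v) \<in> pend (loc (\<rho> k') i)"
    "V (\<rho> k') i j = V (\<rho> k) i j"
    using L1[OF R w cor H b] by blast
  have st: "step n t w (\<rho> k') (RunH i h) (\<rho> (Suc k'))" using R k'(2) unfolding run_def by metis
  have I: "idinv n (\<rho> k')" using run_inv[OF R w] by blast
  show ?thesis using step_runH_V[OF st I k'(3)] k' by auto
qed

theorem lemma7:
  fixes n t w :: nat and v0 :: 'v and \<rho> :: "nat \<Rightarrow> 'v conf" and \<sigma> :: "nat \<Rightarrow> 'v act"
  assumes "2 * t < n" and "w \<in> {1..n}"
    and "run n t w v0 \<rho> \<sigma>"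
    and "correct n \<rho> i"
    and "(h, HW j b v) \<in> pend (loc (\<rho> k) i)"
  shows "\<exists>k' \<ge> k. \<sigma> k' = RunH i h"
proof -
  note R = assms(3) and w = assms(2) and cor = assms(4) and H = assms(5)
  have st: "\<And>k. step n t w (\<rho> k) (\<sigma> k) (\<rho> (Suc k))" using R unfolding run_def by blast
  have INV: "\<And>k. idinv n (\<rho> k) \<and> cinv n (\<rho> k)" using run_inv[OF R w] by blast
  have i: "i \<in> {1..n}" using cor unfolding correct_def by auto
  have j: "j \<in> {1..n}" "j \<noteq> i" using idinvD(9,10)[OF conjunct1[OF INV[of k]] H] by auto
  define y where "y = V (\<rho> k) i j"
  show ?thesis
  proof (cases "b = (y + 1) mod 2")
    case True
    then show ?thesis using L1[OF R w cor H] y_def by blast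
  next
    case False
    show ?thesis
    proof (rule ccontr)
      assume neg: "\<not> ?thesis"
      have P1: "\<And>d. (h, HW j b v) \<in> pend (loc (\<rho> (k + d)) i)"
      proof -
        fix d show "(h, HW j b v) \<in> pend (loc (\<rho> (k + d)) i)"
        proof (induction d)
          case 0 then show ?case using H by simp
        next
          case (Suc d)
          have "\<sigma> (k + d) \<noteq> RunH i h" using neg by (metis le_add1)
          then show ?case using step_pend_keep[OF st[of "k + d"] Suc] by simp
        qed
      qed
      have P: "pairok (\<rho> k) j i" using cinvD(2)[OF conjunct2[OF INV[of k]] i j(1) j(2)] .
      have wh: "isW (\<rho> k) j i h b" unfolding isW_def using H by blast
      have c2: "card (OW (\<rho> k) j i) = 2" and bb: "b = (y + 2) mod 2"
        using P wh False y_def unfolding pairok_def by blast+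
      have ch: "\<exists>k1 \<ge> k. V (\<rho> k1) i j \<noteq> y"
      proof (rule ccontr)
        assume "\<not> (\<exists>k1 \<ge> k. V (\<rho> k1) i j \<noteq> y)"
        then have CY: "\<And>k1. k1 \<ge> k \<Longrightarrow> V (\<rho> k1) i j = y" by blast
        have "OW (\<rho> k) j i \<noteq> {h}" using c2 by auto
        moreover have "h \<in> OW (\<rho> k) j i" using wh unfolding OW_def by blast
        ultimately obtain m' where m': "m' \<in> OW (\<rho> k) j i" "m' \<noteq> h" by blast
        then obtain b' where wb': "isW (\<rho> k) j i m' b'" unfolding OW_def by blast
        have "b' \<noteq> b" using P wb' wh m'(2) unfolding pairok_def by blast
        moreover have "b' = (y + 1) mod 2 \<or> b' = (y + 2) mod 2" using P wb' y_def unfolding pairok_def by blast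
        ultimately have b'y: "b' = (y + 1) mod 2" using bb by blast
        from wb' consider v' where "(m', j, i, WRITE b' v') \<in> net (\<rho> k)"
          | v' where "(m', HW j b' v') \<in> pend (loc (\<rho> k) i)" unfolding isW_def by blast
        then show False
        proof cases
          case (2 v')
          obtain k' where "k' \<ge> k" "V (\<rho> (Suc k')) i j = y + 1"
            using L1'[OF R w cor 2] b'y y_def by auto
          then show False using CY[of "Suc k'"] by simp
        next
          case (1 v')
          have "\<exists>k' \<ge> k. \<sigma> k' = Deliver m'" using R cor 1 unfolding run_def by blast
          then obtain kk where kk: "kk \<ge> k" "\<sigma> kk = Deliver m'" by blast
          define k2 where "k2 = (LEAST k'. k' \<ge> k \<and> \<sigma> k' = Deliver m')"
          have k2: "k2 \<ge> k" "\<sigma> k2 = Deliver m'" using LeastI[of "\<lambda>k'. k' \<ge> k \<and> \<sigma> k' = Deliver m'" kk] kk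
            unfolding k2_def by blast+
          have k2min: "\<And>k'. k' \<ge> k \<Longrightarrow> k' < k2 \<Longrightarrow> \<sigma> k' \<noteq> Deliver m'"
            using not_less_Least unfolding k2_def by blast
          have innet: "\<And>d. k + d \<le> k2 \<Longrightarrow> (m', j, i, WRITE b' v') \<in> net (\<rho> (k + d))"
          proof -
            fix d show "k + d \<le> k2 \<Longrightarrow> (m', j, i, WRITE b' v') \<in> net (\<rho> (k + d))"
            proof (induction d)
              case 0 then show ?case using 1 by simp
            next
              case (Suc d)
              then have "(m', j, i, WRITE b' v') \<in> net (\<rho> (k + d))" by simp
              moreover have "\<sigma> (k + d) \<noteq> Deliver m'" using k2min Suc.prems by simp
              ultimately show ?case using step_net_keep[OF st[of "k + d"]] by simp
            qed
          qed
          obtain d where kd: "k2 = k + d" using k2(1) le_Suc_ex by blast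
          have "(m', j, i, WRITE b' v') \<in> net (\<rho> k2)" using innet[of d] kd by simp
          then have pm: "(m', HW j b' v') \<in> pend (loc (\<rho> (Suc k2)) i)"
            using step_deliver_pend[OF st[of k2, unfolded k2(2)] conjunct1[OF INV[of k2]]] by blast
          have Vk2: "V (\<rho> (Suc k2)) i j = y" using CY k2(1) by simp
          obtain k' where "k' \<ge> Suc k2" "V (\<rho> (Suc k')) i j = y + 1"
            using L1'[OF R w cor pm] b'y Vk2 by auto
          then show False using CY[of "Suc k'"] k2(1) by simp
        qed
      qed
      define k1 where "k1 = (LEAST k1. k1 \<ge> k \<and> V (\<rho> k1) i j \<noteq> y)"
      have k1: "k1 \<ge> k" "V (\<rho> k1) i j \<noteq> y" using LeastI_ex[OF ch] unfolding k1_def by blast+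
      have k1min: "\<And>k'. k' \<ge> k \<Longrightarrow> k' < k1 \<Longrightarrow> V (\<rho> k') i j = y"
        using not_less_Least unfolding k1_def by blast
      have "k1 \<noteq> k" using k1(2) y_def by auto
      then have kl: "k < k1" using k1(1) by simp
      then obtain k3 where k30: "k1 = Suc k3" by (cases k1) auto
      then have k3: "k1 = Suc k3" "k3 \<ge> k" using kl by simp_all
      have Vk3: "V (\<rho> k3) i j = y" using k1min k3 by simp
      have "V (\<rho> k1) i j = y + 1"
        using step_V[OF st[of k3] conjunct1[OF INV[of k3]] j(2)] k1(2) Vk3 k3(1) by auto
      then have bk1: "b = (V (\<rho> k1) i j + 1) mod 2" using bb by simp
      obtain d where kd: "k1 = k + d" using k1(1) le_Suc_ex by blast
      have Hk1: "(h, HW j b v) \<in> pend (loc (\<rho> k1) i)" using P1[of d] kd by simp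
      obtain k' where "k' \<ge> k1" "\<sigma> k' = RunH i h" using L1[OF R w cor Hk1 bk1] by blast
      then show False using neg k1(1) by auto
    qed
  qed
qed

end
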